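(* Let $U\subseteq\mathbb{R}$ be a nonempty open set and $A\subseteq\mathbb{R}$ a set that is both meager and Lebesgue null. Then there are pairwise disjoint sets $D_k\subseteq U$ and reals $x_k$ ($k\in\omega$) such that $\bigcup_{k\in\omega}D_k$ is nowhere dense and $A\subseteq\bigcup_{k\in\omega}(D_k+x_k)$.
   Context: $D+x=\{d+x:d\in D\}$. *)

theory Defs
  imports "HOL-Analysis.Analysis"
begin

definition nowhere_dense :: "'a::topological_space set \<Rightarrow> bool" where
  "nowhere_dense S \<longleftrightarrow> interior (closure S) = {}"

definition meager :: "'a::topological_space set \<Rightarrow> bool" where
  "meager A \<longleftrightarrow> (\<exists>F :: nat \<Rightarrow> 'a set. (\<forall>n. nowhere_dense (F n)) \<and> A \<subseteq> (\<Union>n. F n))"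

end

theory Submission
  imports Defs "HOL-Library.Nat_Bijection"
begin


lemma nd_subset: "nowhere_dense T \<Longrightarrow> P \<subseteq> T \<Longrightarrow> nowhere_dense P"
  unfolding nowhere_dense_def by (metis closure_mono interior_mono subset_empty)

lemma nd_translate: fixes P :: "real set" shows "nowhere_dense P \<Longrightarrow> nowhere_dense ((\<lambda>d. d - x) ` P)"
  unfolding nowhere_dense_def by (simp add: closure_translation_subtract interior_translation_subtract)

lemma interior_finite_UN_closed:
  fixes X :: "nat \<Rightarrow> real set"
  assumes "\<And>k. closed (X k)" "\<And>k. interior (X k) = {}"
  shows "interior (\<Union>k<n. X k) = {}"
proof (induction n)
  case 0 then show ?case by simp
next
  case (Suc n)
  have "(\<Union>k<Suc n. X k) = X n \<union> (\<Union>k<n. X k)" by (auto simp: lessThan_Suc)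
  moreover have "interior (X n \<union> (\<Union>k<n. X k)) = interior (X n)"
    by (rule interior_closed_Un_empty_interior) (use assms Suc in auto)
  ultimately show ?case using assms by simp
qed

lemma nd_local:
  fixes S :: "real set" and q :: real
  assumes "\<And>y. y \<noteq> q \<Longrightarrow> \<exists>V K. open V \<and> y \<in> V \<and> closed K \<and> interior K = {} \<and> S \<inter> V \<subseteq> K"
  shows "nowhere_dense S"
  unfolding nowhere_dense_def
proof (rule ccontr)
  assume ne: "interior (closure S) \<noteq> {}"
  define T where "T = interior (closure S) - {q}"
  have oT: "open T" unfolding T_def by (simp add: open_Diff)
  have "T \<noteq> {}"
  proof
    assume "T = {}"
    then have "interior (closure S) = {q}" using ne unfolding T_def by blast
    then show False using not_open_singleton[of q] by (metis open_interior)
  qed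
  then obtain y where y: "y \<in> T" by blast
  then have "y \<noteq> q" unfolding T_def by blast
  from assms[OF this] obtain V K where VK0: "open V \<and> y \<in> V \<and> closed K \<and> interior K = {} \<and> S \<inter> V \<subseteq> K"
    by (elim exE)
  then have VK: "open V" "y \<in> V" "closed K" "interior K = {}" "S \<inter> V \<subseteq> K" by simp_all
  define W where "W = T \<inter> V - K"
  have oW: "open W" unfolding W_def using oT VK by (intro open_Diff open_Int) auto
  have "W \<noteq> {}"
  proof
    assume "W = {}"
    then have "T \<inter> V \<subseteq> K" unfolding W_def by blast
    then have "T \<inter> V \<subseteq> interior K" using interior_maximal[of "T \<inter> V" K] open_Int[OF oT VK(1)] by blast
    then show False using VK y by auto
  qed
  moreover have "W \<subseteq> closure S" unfolding W_def T_def using interior_subset by blast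
  ultimately have "W \<inter> S \<noteq> {}" using open_Int_closure_eq_empty[OF oW, of S] by blast
  moreover have "W \<inter> S = {}" unfolding W_def using VK by blast
  ultimately show False by blast
qed

lemma place:
  fixes P :: "nat \<Rightarrow> real set" and a l :: "nat \<Rightarrow> real"
  assumes l0: "\<And>k. l k \<ge> 0" and Pk: "\<And>k. P k \<subseteq> {a k ..< a k + l k}"
    and nd: "\<And>k. nowhere_dense (P k)" and sb: "\<And>K. (\<Sum>k<K. l k) \<le> e"
    and er: "e < r" and U: "ball c r \<subseteq> U"
  shows "\<exists>(D :: nat \<Rightarrow> real set) (x :: nat \<Rightarrow> real).
           (\<forall>k. D k \<subseteq> U) \<and> disjoint_family D \<and>
           nowhere_dense (\<Union>k. D k) \<and>
           (\<Union>k. P k) \<subseteq> (\<Union>k. (\<lambda>d. d + x k) ` D k)"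
proof -
  define s where "s k = (\<Sum>j<k. l j)" for k
  define x where "x k = a k - (c + s k)" for k
  define D where "D k = (\<lambda>d. d - x k) ` P k" for k
  have smono: "s j \<le> s k" if "j \<le> k" for j k
    unfolding s_def by (rule sum_mono2) (use that l0 in auto)
  have sSuc: "s (Suc k) = s k + l k" for k unfolding s_def by simp
  have s0: "s k \<ge> 0" for k unfolding s_def by (simp add: l0 sum_nonneg)
  have Dk: "D k \<subseteq> {c + s k ..< c + s (Suc k)}" for k
    using Pk[of k] unfolding D_def x_def sSuc by auto
  have bkw: "(\<lambda>d. d + x k) ` D k = P k" for k
    unfolding D_def by (simp add: image_image)
  have bdd: "bdd_above (range s)" using sb unfolding s_def by (intro bdd_aboveI[of _ e]) auto
  define p where "p = (SUP k. s k)"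
  have sp: "s k \<le> p" for k unfolding p_def using bdd by (simp add: cSUP_upper)
  have pe: "p \<le> e" unfolding p_def using sb by (simp add: cSUP_least s_def)
  have DU: "D k \<subseteq> U" for k
  proof -
    have "D k \<subseteq> ball c r"
    proof
      fix z assume "z \<in> D k"
      then have "c + s k \<le> z" "z < c + s (Suc k)" using Dk[of k] by auto
      moreover have "s (Suc k) \<le> e" using sb unfolding s_def by blast
      ultimately show "z \<in> ball c r" using s0[of k] er by (auto simp: dist_real_def)
    qed
    then show ?thesis using U by blast
  qed
  have disj: "disjoint_family D"
    unfolding disjoint_family_on_def
  proof (intro ballI impI)
    fix i j :: nat assume "i \<noteq> j"
    have *: "D i \<inter> D j = {}" if "i < j" for i j
    proof -
      have "s (Suc i) \<le> s j" using smono that by simp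
      show ?thesis
      proof (rule equals0I)
        fix z assume "z \<in> D i \<inter> D j"
        then have "z < c + s (Suc i)" "c + s j \<le> z" using Dk[of i] Dk[of j] by auto
        then show False using \<open>s (Suc i) \<le> s j\<close> by linarith
      qed
    qed
    show "D i \<inter> D j = {}"
      using \<open>i \<noteq> j\<close> *[of i j] *[of j i] by (metis Int_commute linorder_neqE_nat)
  qed
  have ndS: "nowhere_dense (\<Union>k. D k)"
  proof (rule nd_local[where q = "c + p"])
    fix y assume "y \<noteq> c + p"
    then consider "y > c + p" | "y < c + p" by linarith
    then show "\<exists>V K. open V \<and> y \<in> V \<and> closed K \<and> interior K = {} \<and> (\<Union>k. D k) \<inter> V \<subseteq> K"
    proof cases
      case 1
      have "(\<Union>k. D k) \<inter> {c + p<..} \<subseteq> {}"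
      proof
        fix z assume "z \<in> (\<Union>k. D k) \<inter> {c + p<..}"
        then obtain k where "z \<in> D k" "z > c + p" by auto
        have "z < c + s (Suc k)" using Dk[of k] \<open>z \<in> D k\<close> by auto
        then show "z \<in> {}" using sp[of "Suc k"] \<open>z > c + p\<close> by linarith
      qed
      moreover have "y \<in> {c + p<..}" using 1 by simp
      ultimately have H: "open {c + p<..} \<and> y \<in> {c + p<..} \<and> closed ({}::real set) \<and> interior ({}::real set) = {} \<and> (\<Union>k. D k) \<inter> {c + p<..} \<subseteq> {}"
        by simp
      show ?thesis
        apply (rule exI[of _ "{c + p<..}"])
        apply (rule exI[of _ "{}"])
        by (rule H)
    next
      case 2
      then have "y - c < (SUP k. s k)" unfolding p_def by simp
      then obtain k0 where k0: "y - c < s k0" using less_cSUP_iff[of UNIV s "y - c"] bdd by blast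
      define K where "K = (\<Union>k<k0. closure (D k))"
      have "closed K" unfolding K_def by (intro closed_UN) auto
      moreover have "interior K = {}" unfolding K_def
      proof (rule interior_finite_UN_closed)
        fix k show "interior (closure (D k)) = {}"
          using nd_translate[OF nd[of k], of "x k"] unfolding nowhere_dense_def D_def
          by simp
      qed simp
      moreover have "(\<Union>k. D k) \<inter> {..< c + s k0} \<subseteq> K"
      proof
        fix z assume "z \<in> (\<Union>k. D k) \<inter> {..< c + s k0}"
        then obtain k where z: "z \<in> D k" "z < c + s k0" by auto
        have "k < k0"
        proof (rule ccontr)
          assume "\<not> k < k0"
          then have "s k0 \<le> s k" using smono[of k0 k] by linarith
          moreover have "c + s k \<le> z" using z(1) Dk[of k] by auto
          ultimately show False using z(2) by linarith
        qed
        then show "z \<in> K" unfolding K_def using z closure_subset by blast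
      qed
      moreover have "y \<in> {..< c + s k0}" using k0 by simp
      ultimately have H: "open {..< c + s k0} \<and> y \<in> {..< c + s k0} \<and> closed K \<and> interior K = {} \<and> (\<Union>k. D k) \<inter> {..< c + s k0} \<subseteq> K"
        by simp
      show ?thesis
        apply (rule exI[of _ "{..< c + s k0}"])
        apply (rule exI[of _ K])
        by (rule H)
    qed
  qed
  have cov: "(\<Union>k. P k) \<subseteq> (\<Union>k. (\<lambda>d. d + x k) ` D k)"
    unfolding bkw by (rule order_refl)
  have DU': "\<forall>k. D k \<subseteq> U" using DU by simp
  show ?thesis
    apply (rule exI[of _ D])
    apply (rule exI[of _ x])
    using DU' disj ndS cov by (intro conjI)
qed



definition dy :: "nat \<Rightarrow> int \<Rightarrow> real set" where
  "dy m j = {of_int j / 2^m ..< (of_int j + 1) / 2^m}"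

lemma dy_mem: "z \<in> dy m j \<longleftrightarrow> \<lfloor>z * 2^m\<rfloor> = j"
  unfolding dy_def by (simp add: floor_eq_iff pos_divide_le_eq pos_less_divide_eq)

lemma floor_level:
  fixes z :: real assumes "n \<le> m"
  shows "\<lfloor>z * 2^n\<rfloor> = \<lfloor>z * 2^m\<rfloor> div 2^(m-n)"
proof -
  have m: "m = n + (m - n)" using assms by simp
  have "z * 2^n = (z * 2^m) / real_of_int (2^(m-n))"
    by (subst m, simp add: power_add)
  then show ?thesis using floor_divide_real_eq_div[of "2^(m-n)" "z * 2^m"] by simp
qed

lemma dy_nest:
  assumes "n \<le> m" "z \<in> dy m j" "z \<in> dy n i" "w \<in> dy m j"
  shows "w \<in> dy n i"
  using assms floor_level[OF assms(1), of z] floor_level[OF assms(1), of w]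
  by (simp add: dy_mem)

lemma dy_disj_same: "j \<noteq> j' \<Longrightarrow> dy m j \<inter> dy m j' = {}"
  by (auto simp: dy_mem)

lemma null_cover:
  fixes A :: "real set"
  assumes A: "A \<in> null_sets lebesgue" and e: "e > 0"
  shows "\<exists>(a::nat \<Rightarrow> real) (l::nat \<Rightarrow> real). (\<forall>k. l k \<ge> 0) \<and> A \<subseteq> (\<Union>k. {a k ..< a k + l k}) \<and> (\<forall>K. (\<Sum>k<K. l k) \<le> e)"
proof -
  obtain G where G: "open G" "A \<subseteq> G" "(G - A) \<in> lmeasurable" "emeasure lebesgue (G - A) < ennreal e"
    using sets_lebesgue_outer_open[OF null_setsD2[OF A] e] by blast
  have "G = (G - A) \<union> A" using G(2) by blast
  then have "emeasure lebesgue G = emeasure lebesgue (G - A)"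
    using emeasure_Un_null_set[of "G - A" lebesgue A] G(3) A by (simp add: fmeasurable_def)
  then have eG: "emeasure lborel G < ennreal e"
    using G(4) emeasure_completion[of G lborel] borel_open[OF G(1)] by simp
  have Gs: "G \<in> sets lborel" using borel_open[OF G(1)] by simp
  have Gf: "G \<in> fmeasurable lborel"
    using eG Gs by (intro fmeasurableI) (auto simp: top_unique dest: order.strict_trans2[of _ _ \<infinity>])
  have mG: "measure lborel G \<le> e"
    using eG emeasure_eq_measure2[OF Gf] ennreal_less_iff[OF measure_nonneg[of lborel G], of e] by simp
  define mx where "mx m j \<longleftrightarrow> dy m j \<subseteq> G \<and> (\<forall>n<m. \<forall>i. dy n i \<subseteq> G \<longrightarrow> dy n i \<inter> dy m j = {})" for m j
  define dec where "dec k = (fst (prod_decode k), int_decode (snd (prod_decode k)))" for k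
  have dec_inj: "dec k = dec k' \<Longrightarrow> k = k'" for k k'
    unfolding dec_def
    by (metis inj_int_decode inj_onD inj_prod_decode iso_tuple_UNIV_I prod.collapse prod.inject)
  define a where "a k = (of_int (snd (dec k)) / 2 ^ fst (dec k) :: real)" for k
  define l where "l k = (if mx (fst (dec k)) (snd (dec k)) then 1 / 2 ^ fst (dec k) else (0::real))" for k
  define Q where "Q k = {a k ..< a k + l k}" for k
  have l0: "l k \<ge> 0" for k unfolding l_def by simp
  have Qmx: "Q k = (if mx (fst (dec k)) (snd (dec k)) then dy (fst (dec k)) (snd (dec k)) else {})" for k
    unfolding Q_def a_def l_def dy_def by (auto simp: add_divide_distrib)
  have Qdisj: "Q k \<inter> Q k' = {}" if "k \<noteq> k'" for k k'
  proof -
    obtain m j where mj: "dec k = (m, j)" by fastforce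
    obtain m' j' where mj': "dec k' = (m', j')" by fastforce
    have ne: "(m, j) \<noteq> (m', j')" using dec_inj that mj mj' by metis
    show ?thesis
    proof (cases "mx m j \<and> mx m' j'")
      case False then show ?thesis unfolding Qmx mj mj' by auto
    next
      case True
      then have "dy m j \<inter> dy m' j' = {}"
      proof -
        consider "m = m'" | "m < m'" | "m' < m" by linarith
        then show ?thesis
        proof cases
          case 1 then show ?thesis using ne dy_disj_same by auto
        next
          case 2 then show ?thesis using True unfolding mx_def by auto
        next
          case 3 then show ?thesis using True unfolding mx_def by auto
        qed
      qed
      then show ?thesis unfolding Qmx mj mj' using True by simp
    qed
  qed
  have QG: "Q k \<subseteq> G" for k unfolding Qmx mx_def by auto
  have sums: "(\<Sum>k<K. l k) \<le> e" for K
  proof -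
    have "(\<Sum>k<K. l k) = (\<Sum>k<K. measure lborel (Q k))"
      unfolding Q_def using l0 by simp
    also have "\<dots> = measure lborel (\<Union>k<K. Q k)"
    proof (rule measure_finite_Union[symmetric])
      show "disjoint_family_on Q {..<K}" using Qdisj by (auto simp: disjoint_family_on_def)
    qed (auto simp: Q_def l0)
    also have "\<dots> \<le> measure lborel G"
      by (rule measure_mono_fmeasurable) (use QG Gf in \<open>auto simp: Q_def\<close>)
    finally show ?thesis using mG by linarith
  qed
  have cover: "A \<subseteq> (\<Union>k. Q k)"
  proof
    fix z assume "z \<in> A"
    then have "z \<in> G" using G(2) by blast
    then obtain d where d: "d > 0" "ball z d \<subseteq> G" using G(1) open_contains_ball by blast
    obtain m where m: "(1/2::real)^m < d" using real_arch_pow_inv[of d "1/2"] d by auto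
    have ex: "\<exists>m j. z \<in> dy m j \<and> dy m j \<subseteq> G"
    proof (intro exI conjI)
      show "z \<in> dy m \<lfloor>z * 2^m\<rfloor>" by (simp add: dy_mem)
      show "dy m \<lfloor>z * 2^m\<rfloor> \<subseteq> G"
      proof
        fix w assume w: "w \<in> dy m \<lfloor>z * 2^m\<rfloor>"
        have zz: "z \<in> dy m \<lfloor>z * 2^m\<rfloor>" by (simp add: dy_mem)
        have w1: "real_of_int \<lfloor>z * 2 ^ m\<rfloor> \<le> w * 2 ^ m" "w * 2 ^ m < real_of_int \<lfloor>z * 2 ^ m\<rfloor> + 1"
          using w unfolding dy_def by (auto simp: divide_simps)
        have z1: "real_of_int \<lfloor>z * 2 ^ m\<rfloor> \<le> z * 2 ^ m" "z * 2 ^ m < real_of_int \<lfloor>z * 2 ^ m\<rfloor> + 1"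
          by linarith+
        have "\<bar>w * 2^m - z * 2^m\<bar> < 1" using w1 z1 by linarith
        moreover have "\<bar>w * 2^m - z * 2^m\<bar> = \<bar>w - z\<bar> * 2^m"
        proof -
          have "w * 2^m - z * 2^m = (w - z) * 2^m" by (simp add: left_diff_distrib)
          then show ?thesis by (simp add: abs_mult)
        qed
        ultimately have "\<bar>w - z\<bar> < 1 / 2^m" by (simp add: less_divide_eq)
        then have "dist w z < d" using m by (simp add: dist_real_def power_one_over)
        then show "w \<in> G" using d by (auto simp: dist_commute)
      qed
    qed
    define m0 where "m0 = (LEAST m. \<exists>j. z \<in> dy m j \<and> dy m j \<subseteq> G)"
    obtain j0 where j0: "z \<in> dy m0 j0" "dy m0 j0 \<subseteq> G"
      using LeastI_ex[OF ex] unfolding m0_def by blast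
    have "mx m0 j0"
      unfolding mx_def
    proof (intro conjI allI impI)
      show "dy m0 j0 \<subseteq> G" by (rule j0(2))
      fix n i assume n: "n < m0" and sub: "dy n i \<subseteq> G"
      show "dy n i \<inter> dy m0 j0 = {}"
      proof (rule ccontr)
        assume "dy n i \<inter> dy m0 j0 \<noteq> {}"
        then obtain w where "w \<in> dy n i" "w \<in> dy m0 j0" by blast
        then have "z \<in> dy n i" using dy_nest[of n m0 w j0 i z] n j0 by simp
        then have "\<exists>j. z \<in> dy n j \<and> dy n j \<subseteq> G" using sub by blast
        then have "m0 \<le> n" unfolding m0_def by (rule Least_le)
        then show False using n by simp
      qed
    qed
    moreover have "dec (prod_encode (m0, int_encode j0)) = (m0, j0)"
      unfolding dec_def by simp
    ultimately have "z \<in> Q (prod_encode (m0, int_encode j0))"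
      unfolding Qmx using j0 by simp
    then show "z \<in> (\<Union>k. Q k)" by blast
  qed
  have H: "(\<forall>k. l k \<ge> 0) \<and> A \<subseteq> (\<Union>k. {a k ..< a k + l k}) \<and> (\<forall>K. (\<Sum>k<K. l k) \<le> e)"
    using l0 cover sums unfolding Q_def by blast
  show ?thesis by (rule exI[where x=a], rule exI[where x=l], rule H)
qed


lemma geom_bound: "(\<Sum>n<K. r / 2^(n+2)) \<le> (r::real) / 2 - r / 2^(K+1)"
proof (induction K)
  case 0 then show ?case by simp
next
  case (Suc K)
  have "(\<Sum>n<Suc K. r / 2^(n+2)) = (\<Sum>n<K. r / 2^(n+2)) + r / 2^(K+2)" by simp
  also have "\<dots> \<le> r / 2 - r / 2^(K+1) + r / 2^(K+2)" using Suc by simp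
  also have "\<dots> = r / 2 - r / 2^(Suc K + 1)" by (simp add: field_simps)
  finally show ?case .
qed

theorem mainTheorem17:
  fixes U A :: "real set"
  assumes "open U" and "U \<noteq> {}"
    and "meager A" and "A \<in> null_sets lebesgue"
  shows "\<exists>(D :: nat \<Rightarrow> real set) (x :: nat \<Rightarrow> real).
           (\<forall>k. D k \<subseteq> U) \<and> disjoint_family D \<and>
           nowhere_dense (\<Union>k. D k) \<and>
           A \<subseteq> (\<Union>k. (\<lambda>d. d + x k) ` D k)"
proof -
  obtain c where c: "c \<in> U" using assms(2) by blast
  obtain r where r: "r > 0" "ball c r \<subseteq> U" using assms(1) c open_contains_ball by blast
  obtain F :: "nat \<Rightarrow> real set" where F: "\<And>n. nowhere_dense (F n)" "A \<subseteq> (\<Union>n. F n)"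
    using assms(3) unfolding meager_def by blast
  have "\<forall>n. \<exists>(a::nat \<Rightarrow> real) (l::nat \<Rightarrow> real). (\<forall>k. l k \<ge> 0) \<and> A \<subseteq> (\<Union>k. {a k ..< a k + l k}) \<and> (\<forall>K. (\<Sum>k<K. l k) \<le> r / 2^(n+2))"
  proof
    fix n
    show "\<exists>(a::nat \<Rightarrow> real) (l::nat \<Rightarrow> real). (\<forall>k. l k \<ge> 0) \<and> A \<subseteq> (\<Union>k. {a k ..< a k + l k}) \<and> (\<forall>K. (\<Sum>k<K. l k) \<le> r / 2^(n+2))"
      by (rule null_cover[OF assms(4)]) (use r in simp)
  qed
  then have "\<exists>a. \<forall>n. \<exists>(l::nat \<Rightarrow> real). (\<forall>k. l k \<ge> 0) \<and> A \<subseteq> (\<Union>k. {a n k ..< a n k + l k}) \<and> (\<forall>K. (\<Sum>k<K. l k) \<le> r / 2^(n+2))"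
    by (rule choice)
  then obtain a :: "nat \<Rightarrow> nat \<Rightarrow> real" where
    "\<forall>n. \<exists>(l::nat \<Rightarrow> real). (\<forall>k. l k \<ge> 0) \<and> A \<subseteq> (\<Union>k. {a n k ..< a n k + l k}) \<and> (\<forall>K. (\<Sum>k<K. l k) \<le> r / 2^(n+2))"
    by (elim exE)
  then have "\<exists>l. \<forall>n. (\<forall>k. l n k \<ge> (0::real)) \<and> A \<subseteq> (\<Union>k. {a n k ..< a n k + l n k}) \<and> (\<forall>K. (\<Sum>k<K. l n k) \<le> r / 2^(n+2))"
    by (rule choice)
  then obtain l :: "nat \<Rightarrow> nat \<Rightarrow> real" where
    al: "\<forall>n. (\<forall>k. l n k \<ge> 0) \<and> A \<subseteq> (\<Union>k. {a n k ..< a n k + l n k}) \<and> (\<forall>K. (\<Sum>k<K. l n k) \<le> r / 2^(n+2))"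
    by (elim exE)
  define a' where "a' k = a (fst (prod_decode k)) (snd (prod_decode k))" for k
  define l' where "l' k = l (fst (prod_decode k)) (snd (prod_decode k))" for k
  define P where "P k = A \<inter> F (fst (prod_decode k)) \<inter> {a' k ..< a' k + l' k}" for k
  have l'0: "l' k \<ge> 0" for k unfolding l'_def using al by blast
  have Pk: "P k \<subseteq> {a' k ..< a' k + l' k}" for k unfolding P_def by blast
  have ndP: "nowhere_dense (P k)" for k
    by (rule nd_subset[OF F(1)[of "fst (prod_decode k)"]]) (auto simp: P_def)
  have sb: "(\<Sum>k<K. l' k) \<le> r / 2" for K
  proof -
    have "(\<Sum>k<K. l' k) = (\<Sum>q\<in>prod_decode ` {..<K}. l (fst q) (snd q))"
      unfolding l'_def by (simp add: sum.reindex inj_prod_decode)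
    also have "\<dots> \<le> (\<Sum>q\<in>{..<K} \<times> {..<K}. l (fst q) (snd q))"
    proof (rule sum_mono2)
      show "prod_decode ` {..<K} \<subseteq> {..<K} \<times> {..<K}"
      proof
        fix q assume "q \<in> prod_decode ` {..<K}"
        then obtain k where k: "k < K" "q = prod_decode k" by blast
        obtain n i where q: "q = (n, i)" by fastforce
        have "prod_encode (n, i) = k" using k q by (metis prod_decode_inverse)
        then have "n \<le> k" "i \<le> k" using le_prod_encode_1[of n i] le_prod_encode_2[of i n] by simp_all
        then show "q \<in> {..<K} \<times> {..<K}" using k(1) unfolding q by simp
      qed
    qed (use al in auto)
    also have "\<dots> = (\<Sum>n<K. \<Sum>i<K. l n i)"
      by (simp add: sum.cartesian_product case_prod_beta')
    also have "\<dots> \<le> (\<Sum>n<K. r / 2^(n+2))"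
      by (rule sum_mono) (use al in blast)
    also have "\<dots> \<le> r / 2 - r / 2^(K+1)" by (rule geom_bound)
    also have "\<dots> \<le> r / 2" using r by simp
    finally show ?thesis .
  qed
  have AP: "A \<subseteq> (\<Union>k. P k)"
  proof
    fix z assume z: "z \<in> A"
    then obtain n where n: "z \<in> F n" using F(2) by blast
    obtain i where i: "z \<in> {a n i ..< a n i + l n i}" using al z by blast
    have "z \<in> P (prod_encode (n, i))"
      unfolding P_def a'_def l'_def using z n i by simp
    then show "z \<in> (\<Union>k. P k)" by blast
  qed
  have "r / 2 < r" using r by simp
  from place[OF l'0 Pk ndP sb this r(2)] obtain D :: "nat \<Rightarrow> real set" and x :: "nat \<Rightarrow> real" where
    DX0: "(\<forall>k. D k \<subseteq> U) \<and> disjoint_family D \<and> nowhere_dense (\<Union>k. D k) \<and>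
      (\<Union>k. P k) \<subseteq> (\<Union>k. (\<lambda>d. d + x k) ` D k)"
    by (elim exE) (rule that)
  have H: "(\<forall>k. D k \<subseteq> U) \<and> disjoint_family D \<and> nowhere_dense (\<Union>k. D k) \<and>
      A \<subseteq> (\<Union>k. (\<lambda>d. d + x k) ` D k)"
  proof (intro conjI)
    show "\<forall>k. D k \<subseteq> U" using DX0 by (rule conjunct1)
    show "disjoint_family D" using DX0 by simp
    show "nowhere_dense (\<Union>k. D k)" using DX0 by simp
    have "(\<Union>k. P k) \<subseteq> (\<Union>k. (\<lambda>d. d + x k) ` D k)" using DX0 by simp
    with AP show "A \<subseteq> (\<Union>k. (\<lambda>d. d + x k) ` D k)" by (rule order.trans)
  qed
  show ?thesis by (rule exI[where x=D], rule exI[where x=x], rule H)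
qed

end
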